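(* Let $G$ be a compact Lie group acting linearly and unitarily on $\mathbb{C}^n$ with moment map $\mu:\mathbb{C}^n\to\mathfrak{g}^*$, let $\alpha\in\mathfrak{g}^*$ be central, and let $\mathfrak{M}=(\mu_{\mathbb{R}}^{-1}(\alpha)\cap\mu_{\mathbb{C}}^{-1}(0))/G$ with the function $\Phi:\mathfrak{M}\to\mathbb{R}$, $\Phi[z,w]=\tfrac12|w|^2$. If $\mu$ is proper, then $\Phi$ is proper.
   Context: $T^*\mathbb{C}^n=\mathbb{C}^n\times(\mathbb{C}^n)^*$ with points $(z,w)$; $G$ acts on it by the induced action, with real moment map $\mu_{\mathbb{R}}(z,w)=\mu(z)-\mu(w)\in\mathfrak{g}^*$ and complex moment map $\mu_{\mathbb{C}}(z,w)(v)=w(\hat v_z)$ for $v\in\mathfrak{g}_{\mathbb{C}}$, $\hat v_z$ the induced tangent vector at $z$. $[z,w]$ denotes the $G$-orbit of $(z,w)$. The function $\Phi$ is the moment map for the circle action $\tau\cdot[z,w]=[z,\tau w]$, $\tau\in S^1$. *)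

theory Defs
  imports "HOL-Analysis.Analysis"
begin

text \<open>C^n is modelled as complex^'n; a linear unitary action of a compact Lie group is
  modelled by its image, a compact subgroup G of U(n) (a set of unitary matrices).
  A covector w in (C^n)^* is given by its coefficient vector: w(u) = sum_i w_i u_i.\<close>

definition adjoint_mat :: "complex^'n^'n \<Rightarrow> complex^'n^'n" where
  "adjoint_mat A = (\<chi> i j. cnj (A $ j $ i))"

definition unitary_mat :: "complex^'n^'n \<Rightarrow> bool" where
  "unitary_mat A \<longleftrightarrow> A ** adjoint_mat A = mat 1 \<and> adjoint_mat A ** A = mat 1"

definition compact_unitary_group :: "(complex^'n^'n) set \<Rightarrow> bool" where
  "compact_unitary_group G \<longleftrightarrow>
     mat 1 \<in> G \<and> (\<forall>g\<in>G. \<forall>h\<in>G. g ** h \<in> G) \<and> (\<forall>g\<in>G. matrix_inv g \<in> G)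
     \<and> (\<forall>g\<in>G. unitary_mat g) \<and> compact G"

definition lie_alg :: "(complex^'n^'n) set \<Rightarrow> (complex^'n^'n) set" where
  "lie_alg G = {X. \<exists>c::real \<Rightarrow> complex^'n^'n. c 0 = mat 1 \<and> (\<forall>t. c t \<in> G)
                    \<and> (c has_vector_derivative X) (at 0)}"

definition lie_alg_C :: "(complex^'n^'n) set \<Rightarrow> (complex^'n^'n) set" where
  "lie_alg_C G = {X + (\<chi> i j. \<i> * Y $ i $ j) | X Y. X \<in> lie_alg G \<and> Y \<in> lie_alg G}"

definition herm :: "complex^'n \<Rightarrow> complex^'n \<Rightarrow> complex" where
  "herm u v = (\<Sum>i\<in>UNIV. cnj (u $ i) * v $ i)"

text \<open>Moment map of the unitary action on C^n: mu(z)(X) = (i/2) z^* X z (real for X in u(n)).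
  Elements of g^* are represented by functions on matrices, only their values on g matter.\<close>
definition mu :: "complex^'n \<Rightarrow> complex^'n^'n \<Rightarrow> real" where
  "mu z X = Re (\<i> / 2 * herm z (X *v z))"

text \<open>mu(w) for a covector w: apply mu to the vector corresponding to w under the Hermitian metric.\<close>
definition mu_dual :: "complex^'n \<Rightarrow> complex^'n^'n \<Rightarrow> real" where
  "mu_dual w = mu (\<chi> i. cnj (w $ i))"

definition mu_R :: "complex^'n \<Rightarrow> complex^'n \<Rightarrow> complex^'n^'n \<Rightarrow> real" where
  "mu_R z w X = mu z X - mu_dual w X"

definition mu_C :: "complex^'n \<Rightarrow> complex^'n \<Rightarrow> complex^'n^'n \<Rightarrow> complex" where
  "mu_C z w X = (\<Sum>i\<in>UNIV. w $ i * (X *v z) $ i)"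

definition level_set :: "(complex^'n^'n) set \<Rightarrow> (complex^'n^'n \<Rightarrow> real)
                          \<Rightarrow> ((complex^'n) \<times> (complex^'n)) set" where
  "level_set G \<alpha> = {(z, w). (\<forall>X\<in>lie_alg G. mu_R z w X = \<alpha> X) \<and> (\<forall>X\<in>lie_alg_C G. mu_C z w X = 0)}"

text \<open>Induced action on T^*C^n: g.(z,w) = (g z, w o g^{-1}).\<close>
definition orbit :: "(complex^'n^'n) set \<Rightarrow> (complex^'n) \<times> (complex^'n)
                       \<Rightarrow> ((complex^'n) \<times> (complex^'n)) set" where
  "orbit G p = {(g *v fst p, transpose (matrix_inv g) *v snd p) | g. g \<in> G}"

definition hk_quotient :: "(complex^'n^'n) set \<Rightarrow> (complex^'n^'n \<Rightarrow> real)
                            \<Rightarrow> ((complex^'n) \<times> (complex^'n)) set set" where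
  "hk_quotient G \<alpha> = orbit G ` level_set G \<alpha>"

definition hk_quotient_top :: "(complex^'n^'n) set \<Rightarrow> (complex^'n^'n \<Rightarrow> real)
                                \<Rightarrow> ((complex^'n) \<times> (complex^'n)) set topology" where
  "hk_quotient_top G \<alpha> = topology (\<lambda>U. U \<subseteq> hk_quotient G \<alpha> \<and>
        openin (top_of_set (level_set G \<alpha>)) (\<Union>U))"

text \<open>Phi[z,w] = |w|^2 / 2 (well defined since G acts unitarily).\<close>
definition Phi :: "((complex^'n) \<times> (complex^'n)) set \<Rightarrow> real" where
  "Phi Q = (let p = (SOME p. p \<in> Q) in norm (snd p) ^ 2 / 2)"

definition proper_fn :: "'a topology \<Rightarrow> 'b topology \<Rightarrow> ('a \<Rightarrow> 'b) \<Rightarrow> bool" where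
  "proper_fn X Y f \<longleftrightarrow> (\<forall>K. compactin Y K \<longrightarrow> compactin X {x \<in> topspace X. f x \<in> K})"

text \<open>g^* topologised as functions on g with pointwise (= norm, finite dimension) topology.\<close>
definition dual_top :: "(complex^'n^'n) set \<Rightarrow> (complex^'n^'n \<Rightarrow> real) topology" where
  "dual_top G = product_topology (\<lambda>_. euclideanreal) (lie_alg G)"

definition central :: "(complex^'n^'n) set \<Rightarrow> (complex^'n^'n \<Rightarrow> real) \<Rightarrow> bool" where
  "central G \<alpha> \<longleftrightarrow>
     (\<forall>X\<in>lie_alg G. \<forall>Y\<in>lie_alg G. \<forall>a b::real.
        \<alpha> (a *\<^sub>R X + b *\<^sub>R Y) = a * \<alpha> X + b * \<alpha> Y)
     \<and> (\<forall>g\<in>G. \<forall>X\<in>lie_alg G. \<alpha> (g ** X ** matrix_inv g) = \<alpha> X)"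

end

theory Submission imports Defs begin

definition cj :: "complex^'n^'m \<Rightarrow> complex^'n^'m" where
  "cj A = (\<chi> i j. cnj (A $ i $ j))"
definition vcnj :: "complex^'n \<Rightarrow> complex^'n" where
  "vcnj v = (\<chi> i. cnj (v $ i))"

lemma inv_unique_mat:
  fixes A B C :: "'a::comm_ring_1^'n^'n"
  assumes "A ** B = mat 1" "B ** A = mat 1" "A ** C = mat 1" "C ** A = mat 1"
  shows "B = C"
  by (metis assms(2,3) matrix_mul_assoc matrix_mul_lid matrix_mul_rid)

lemma matrix_inv_eq:
  fixes A B :: "'a::comm_ring_1^'n^'n"
  assumes "A ** B = mat 1" "B ** A = mat 1"
  shows "matrix_inv A = B"
proof -
  have "A ** matrix_inv A = mat 1 \<and> matrix_inv A ** A = mat 1"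
    unfolding matrix_inv_def by (rule someI[of _ B]) (use assms in auto)
  then show ?thesis using inv_unique_mat assms by metis
qed

lemma unitary_inv: "unitary_mat g \<Longrightarrow> matrix_inv g = adjoint_mat g"
  unfolding unitary_mat_def by (simp add: matrix_inv_eq)

lemma adjoint_adjoint[simp]: "adjoint_mat (adjoint_mat A) = A"
  by (simp add: adjoint_mat_def vec_eq_iff)

lemma unitary_adj: "unitary_mat g \<Longrightarrow> unitary_mat (adjoint_mat g)"
  unfolding unitary_mat_def by simp

lemma transpose_adj: "transpose (adjoint_mat g) = cj g"
  by (simp add: adjoint_mat_def transpose_def cj_def vec_eq_iff)

lemma cj_mult: "cj (A ** B) = cj A ** cj B"
  by (simp add: cj_def matrix_matrix_mult_def vec_eq_iff)

lemma cj_vec: "cj A *v w = vcnj (A *v vcnj w)"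
  by (simp add: cj_def vcnj_def matrix_vector_mult_def vec_eq_iff)

lemma vcnj_vcnj[simp]: "vcnj (vcnj v) = v"
  by (simp add: vcnj_def vec_eq_iff)

lemma herm_adj: "herm u (A *v v) = herm (adjoint_mat A *v u) v"
proof -
  have "herm u (A *v v) = (\<Sum>i\<in>UNIV. \<Sum>j\<in>UNIV. cnj (u$i) * A$i$j * v$j)"
    unfolding herm_def matrix_vector_mult_def by (simp add: sum_distrib_left mult.assoc)
  also have "\<dots> = (\<Sum>j\<in>UNIV. \<Sum>i\<in>UNIV. cnj (u$i) * A$i$j * v$j)" by (rule sum.swap)
  also have "\<dots> = herm (adjoint_mat A *v u) v"
    unfolding herm_def adjoint_mat_def matrix_vector_mult_def
    by (simp add: sum_distrib_left sum_distrib_right mult.commute mult.left_commute)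
  finally show ?thesis .
qed

lemma norm_herm: "(norm v)^2 = Re (herm v v)"
proof -
  have "herm v v = (\<Sum>i\<in>UNIV. complex_of_real ((norm (v$i))^2))"
    unfolding herm_def by (intro sum.cong refl) (metis complex_norm_square mult.commute)
  then have "Re (herm v v) = (\<Sum>i\<in>UNIV. (norm (v$i))^2)" by (simp add: Re_sum)
  then show ?thesis by (simp add: norm_vec_def L2_set_def sum_nonneg)
qed

lemma unitary_norm: assumes "unitary_mat g" shows "norm (g *v v) = norm v"
proof -
  have "herm (g *v v) (g *v v) = herm v v"
    using assms by (simp add: herm_adj matrix_vector_mul_assoc unitary_mat_def)
  then have "(norm (g *v v))^2 = (norm v)^2" by (simp add: norm_herm)
  then show ?thesis by (simp add: power2_eq_iff_nonneg)
qed

lemma norm_vcnj[simp]: "norm (vcnj v) = norm v"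
  by (simp add: vcnj_def norm_vec_def)

lemma unitary_cj_norm: "unitary_mat g \<Longrightarrow> norm (cj g *v w) = norm w"
  by (simp add: cj_vec unitary_norm)

lemma scaleR_mat_mult: "A ** (r *\<^sub>R M) = r *\<^sub>R (A ** (M::complex^'n^'n))"
  "(r *\<^sub>R M) ** A = r *\<^sub>R (M ** (A::complex^'n^'n))"
  by (simp_all add: vec_eq_iff matrix_matrix_mult_def scaleR_sum_right)

lemma matrix_add_rdistrib': "((B + C) ** A) = (B ** A) + (C ** (A::'a::semiring_1^'p^'n))" for B C :: "'a::semiring_1^'n^'m"
  by (vector matrix_matrix_mult_def sum.distrib[symmetric] field_simps)

lemma bl_conj: "bounded_linear (\<lambda>M::complex^'n^'n. A ** M ** (B::complex^'n^'n))" for A :: "complex^'n^'n"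
proof -
  have "linear (\<lambda>M::complex^'n^'n. A ** M ** B)"
    by (simp add: linear_iff matrix_add_ldistrib matrix_add_rdistrib' scaleR_mat_mult)
  then show ?thesis using linear_conv_bounded_linear by blast
qed

lemma cj_one[simp]: "cj (mat 1 :: complex^'n^'n) = mat 1"
  by (simp add: cj_def mat_def vec_eq_iff)

locale cug =
  fixes G :: "(complex^'n^'n) set"
  assumes cug: "compact_unitary_group G"
begin

lemma G_unitary: "g \<in> G \<Longrightarrow> unitary_mat g"
  using cug unfolding compact_unitary_group_def by blast

lemma G_adj: "g \<in> G \<Longrightarrow> adjoint_mat g \<in> G"
  using cug unitary_inv G_unitary unfolding compact_unitary_group_def by metis

lemma G_mult: "g \<in> G \<Longrightarrow> h \<in> G \<Longrightarrow> g ** h \<in> G"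
  using cug unfolding compact_unitary_group_def by blast

lemma G_one: "mat 1 \<in> G"
  using cug unfolding compact_unitary_group_def by blast

lemma G_tinv: "g \<in> G \<Longrightarrow> transpose (matrix_inv g) = cj g"
  by (simp add: G_unitary unitary_inv transpose_adj)

lemma orbit_eq: "orbit G p = {(g *v fst p, cj g *v snd p) | g. g \<in> G}"
  unfolding orbit_def by (rule Collect_cong, rule ex_cong1) (metis G_tinv)

lemma self_orbit: "p \<in> orbit G p"
proof -
  have "p = (mat 1 *v fst p, cj (mat 1) *v snd p)" by simp
  then show ?thesis using G_one unfolding orbit_eq by blast
qed

lemma orbit_trans: assumes "q \<in> orbit G p" shows "orbit G q = orbit G p"
proof -
  obtain h where h: "h \<in> G" "q = (h *v fst p, cj h *v snd p)" using assms unfolding orbit_eq by blast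
  have a: "(g *v fst q, cj g *v snd q) = ((g ** h) *v fst p, cj (g ** h) *v snd p)" for g
    using h by (simp add: matrix_vector_mul_assoc cj_mult)
  show ?thesis
  proof
    show "orbit G q \<subseteq> orbit G p" unfolding orbit_eq using a G_mult h(1) by fastforce
    show "orbit G p \<subseteq> orbit G q" unfolding orbit_eq
    proof clarify
      fix k assume k: "k \<in> G"
      have "(k ** adjoint_mat h) ** h = k"
        using G_unitary[OF h(1)] by (simp add: unitary_mat_def flip: matrix_mul_assoc)
      then show "\<exists>g. (k *v fst p, cj k *v snd p) = (g *v fst q, cj g *v snd q) \<and> g \<in> G"
        using a[of "k ** adjoint_mat h"] G_mult[OF k G_adj[OF h(1)]] by metis
    qed
  qed
qed

lemma orbit_disj: "x \<in> orbit G p \<Longrightarrow> x \<in> orbit G q \<Longrightarrow> orbit G p = orbit G q"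
  using orbit_trans by metis

lemma lie_conj: assumes "X \<in> lie_alg G" "g \<in> G" shows "adjoint_mat g ** X ** g \<in> lie_alg G"
proof -
  obtain c where c: "c 0 = mat 1" "\<forall>t. c t \<in> G" "(c has_vector_derivative X) (at 0)"
    using assms(1) unfolding lie_alg_def by blast
  define c' where "c' t = adjoint_mat g ** c t ** g" for t
  have "c' 0 = mat 1" using c(1) G_unitary[OF assms(2)] by (simp add: c'_def unitary_mat_def)
  moreover have "\<forall>t. c' t \<in> G" using c(2) G_mult G_adj assms(2) by (simp add: c'_def)
  moreover have "(c' has_vector_derivative adjoint_mat g ** X ** g) (at 0)"
    unfolding c'_def by (rule bounded_linear.has_vector_derivative[OF bl_conj c(3)])
  ultimately show ?thesis unfolding lie_alg_def by blast
qed


lemma mu_g: "g \<in> G \<Longrightarrow> mu (g *v z) X = mu z (adjoint_mat g ** X ** g)"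
proof -
  have "herm (g *v z) (X *v (g *v z)) = herm z ((adjoint_mat g ** X ** g) *v z)"
    using herm_adj[of z "adjoint_mat g" "X *v (g *v z)"]
    by (simp add: matrix_vector_mul_assoc matrix_mul_assoc)
  then show ?thesis by (simp add: mu_def)
qed

lemma mu_dual_g: "g \<in> G \<Longrightarrow> mu_dual (cj g *v w) X = mu_dual w (adjoint_mat g ** X ** g)"
proof -
  have e: "(\<chi> i. cnj (v $ i)) = vcnj v" for v by (simp add: vcnj_def)
  assume "g \<in> G"
  then show ?thesis unfolding mu_dual_def e by (simp add: cj_vec mu_g)
qed

lemma bil: "(\<Sum>i\<in>UNIV. (transpose A *v a)$i * b$i) = (\<Sum>i\<in>UNIV. a$i * ((A::complex^'n^'n) *v b)$i)"
proof -
  have "(\<Sum>i\<in>UNIV. (transpose A *v a)$i * b$i) = (\<Sum>i\<in>UNIV. \<Sum>j\<in>UNIV. A$j$i * a$j * b$i)"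
    unfolding matrix_vector_mult_def transpose_def by (simp add: sum_distrib_right)
  also have "\<dots> = (\<Sum>j\<in>UNIV. \<Sum>i\<in>UNIV. A$j$i * a$j * b$i)" by (rule sum.swap)
  also have "\<dots> = (\<Sum>i\<in>UNIV. a$i * ((A::complex^'n^'n) *v b)$i)"
    unfolding matrix_vector_mult_def by (simp add: sum_distrib_left mult.commute mult.left_commute)
  finally show ?thesis .
qed

lemma mu_C_g: "g \<in> G \<Longrightarrow> mu_C (g *v z) (cj g *v w) X = mu_C z w (adjoint_mat g ** X ** g)"
  unfolding mu_C_def transpose_adj[symmetric] bil by (simp add: matrix_vector_mul_assoc matrix_mul_assoc)

lemma imult_l: "A ** (\<chi> i j. c * Y$i$j) = (\<chi> i j. c * (A ** Y)$i$j)" for A Y :: "complex^'n^'n"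
  by (simp add: vec_eq_iff matrix_matrix_mult_def sum_distrib_left mult_ac)
lemma imult_r: "(\<chi> i j. c * Y$i$j) ** A = (\<chi> i j. c * (Y ** A)$i$j)" for A Y :: "complex^'n^'n"
  by (simp add: vec_eq_iff matrix_matrix_mult_def sum_distrib_left mult_ac)

lemma lieC_conj: assumes "X \<in> lie_alg_C G" "g \<in> G" shows "adjoint_mat g ** X ** g \<in> lie_alg_C G"
proof -
  obtain A B where AB: "X = A + (\<chi> i j. \<i> * B $ i $ j)" "A \<in> lie_alg G" "B \<in> lie_alg G"
    using assms(1) unfolding lie_alg_C_def by blast
  have "adjoint_mat g ** X ** g = adjoint_mat g ** A ** g + (\<chi> i j. \<i> * (adjoint_mat g ** B ** g) $ i $ j)"
    unfolding AB(1) by (simp add: matrix_add_ldistrib matrix_add_rdistrib' imult_l imult_r)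
  then show ?thesis unfolding lie_alg_C_def using lie_conj AB assms(2) by blast
qed

lemma level_inv:
  assumes cen: "central G \<alpha>" and p: "p \<in> level_set G \<alpha>" and g: "g \<in> G"
  shows "(g *v fst p, cj g *v snd p) \<in> level_set G \<alpha>"
proof -
  obtain z w where zw: "p = (z, w)" by (cases p)
  have inv: "matrix_inv (adjoint_mat g) = g"
    using unitary_inv[OF unitary_adj[OF G_unitary[OF g]]] by simp
  have A: "mu_R (g *v z) (cj g *v w) X = \<alpha> X" if X: "X \<in> lie_alg G" for X
  proof -
    have "mu_R (g *v z) (cj g *v w) X = mu_R z w (adjoint_mat g ** X ** g)"
      using g by (simp add: mu_R_def mu_g mu_dual_g)
    also have "\<dots> = \<alpha> (adjoint_mat g ** X ** g)"
      using p lie_conj[OF X g] unfolding zw level_set_def by blast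
    also have "\<dots> = \<alpha> X" using cen G_adj[OF g] X inv unfolding central_def by metis
    finally show ?thesis .
  qed
  have B: "mu_C (g *v z) (cj g *v w) X = 0" if X: "X \<in> lie_alg_C G" for X
    using p lieC_conj[OF X g] g unfolding zw level_set_def by (simp add: mu_C_g)
  show ?thesis using A B unfolding zw level_set_def by simp
qed

lemma orbit_sub: "central G \<alpha> \<Longrightarrow> p \<in> level_set G \<alpha> \<Longrightarrow> orbit G p \<subseteq> level_set G \<alpha>"
  unfolding orbit_eq using level_inv by blast

lemma Union_hk: "central G \<alpha> \<Longrightarrow> \<Union>(hk_quotient G \<alpha>) = level_set G \<alpha>"
  unfolding hk_quotient_def using orbit_sub self_orbit by blast

lemma Phi_orbit: assumes "p \<in> Q" "Q = orbit G q" shows "Phi Q = (norm (snd p))^2 / 2"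
proof -
  have n: "norm (snd x) = norm (snd q)" if "x \<in> Q" for x
    using that assms(2) unfolding orbit_eq using G_unitary unitary_cj_norm by force
  have "(SOME p. p \<in> Q) \<in> Q" using assms(1) by (rule someI)
  then show ?thesis unfolding Phi_def Let_def using n assms(1) by simp
qed

end

lemma cont_nth[continuous_intros]: "continuous_on S f \<Longrightarrow> continuous_on S (\<lambda>x. f x $ i)"
  unfolding continuous_on_def by (auto intro: tendsto_vec_nth)

lemma cont_muR: "continuous_on UNIV (\<lambda>p. mu_R (fst p) (snd p) X)"
  unfolding mu_R_def mu_dual_def mu_def herm_def matrix_vector_mult_def
  by (intro continuous_intros; auto)

lemma cont_muC: "continuous_on UNIV (\<lambda>p. mu_C (fst p) (snd p) X)"
  unfolding mu_C_def matrix_vector_mult_def vec_lambda_beta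
  by (intro continuous_intros)

lemma cont_mud: "continuous_on UNIV (\<lambda>w. mu_dual w X)"
  unfolding mu_dual_def mu_def herm_def matrix_vector_mult_def
  by (intro continuous_intros; auto)

lemma closed_level: "closed (level_set G \<alpha>)"
proof -
  have e: "level_set G \<alpha> = (\<Inter>X\<in>lie_alg G. {p. mu_R (fst p) (snd p) X = \<alpha> X})
       \<inter> (\<Inter>X\<in>lie_alg_C G. {p. mu_C (fst p) (snd p) X = 0})"
    unfolding level_set_def by auto
  have c1: "closed {p. mu_R (fst p) (snd p) X = \<alpha> X}" for X
    by (rule closed_Collect_eq[OF cont_muR continuous_on_const])
  have c2: "closed {p. mu_C (fst p) (snd p) X = 0}" for X
    by (rule closed_Collect_eq[OF cont_muC continuous_on_const])
  show ?thesis by (subst e) (intro closed_Int closed_INT ballI c1 c2)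
qed


theorem mainTheorem2:
  fixes G :: "(complex^'n^'n) set" and \<alpha> :: "complex^'n^'n \<Rightarrow> real"
  assumes "compact_unitary_group G"
    and "central G \<alpha>"
    and "proper_fn euclidean (dual_top G) (\<lambda>z. restrict (mu z) (lie_alg G))"
  shows "proper_fn (hk_quotient_top G \<alpha>) euclideanreal Phi"
proof -
  interpret cug G using assms(1) by (simp add: cug_def)
  define L where "L = level_set G \<alpha>"
  define HK where "HK = hk_quotient G \<alpha>"
  have HK_eq: "HK = orbit G ` L" unfolding HK_def L_def hk_quotient_def by simp
  have UHK: "\<Union>HK = L" unfolding HK_def L_def using Union_hk[OF assms(2)] .
  have istop: "istopology (\<lambda>U. U \<subseteq> HK \<and> openin (top_of_set L) (\<Union>U))"
    unfolding istopology_def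
  proof (rule conjI; intro allI impI)
    fix S T assume S: "S \<subseteq> HK \<and> openin (top_of_set L) (\<Union>S)"
      and T: "T \<subseteq> HK \<and> openin (top_of_set L) (\<Union>T)"
    have "\<Union>S \<inter> \<Union>T \<subseteq> \<Union>(S \<inter> T)"
    proof
      fix x assume "x \<in> \<Union>S \<inter> \<Union>T"
      then obtain A B where AB: "x \<in> A" "A \<in> S" "x \<in> B" "B \<in> T" by blast
      then obtain a b where "A = orbit G a" "B = orbit G b" using S T unfolding HK_eq by blast
      then have "A = B" using orbit_disj AB by blast
      then show "x \<in> \<Union>(S \<inter> T)" using AB by blast
    qed
    then have "\<Union>(S \<inter> T) = \<Union>S \<inter> \<Union>T" by blast
    then show "S \<inter> T \<subseteq> HK \<and> openin (top_of_set L) (\<Union>(S \<inter> T))" using S T by auto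
  next
    fix KK assume KK: "\<forall>K\<in>KK. K \<subseteq> HK \<and> openin (top_of_set L) (\<Union>K)"
    have "\<Union>(\<Union>KK) = \<Union>((\<lambda>K. \<Union>K) ` KK)" by blast
    moreover have "openin (top_of_set L) (\<Union>((\<lambda>K. \<Union>K) ` KK))" using KK by (intro openin_Union) auto
    ultimately show "\<Union>KK \<subseteq> HK \<and> openin (top_of_set L) (\<Union>(\<Union>KK))" using KK by auto
  qed
  have op: "openin (hk_quotient_top G \<alpha>) = (\<lambda>U. U \<subseteq> HK \<and> openin (top_of_set L) (\<Union>U))"
    unfolding hk_quotient_top_def HK_def[symmetric] L_def[symmetric] using istop by simp
  have top: "topspace (hk_quotient_top G \<alpha>) = HK"
  proof -
    have "openin (top_of_set L) L" using openin_topspace[of "top_of_set L"] by simp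
    then have "openin (hk_quotient_top G \<alpha>) HK" unfolding op using UHK by simp
    then show ?thesis unfolding topspace_def op by auto
  qed
  have cont: "continuous_map (top_of_set L) (hk_quotient_top G \<alpha>) (orbit G)"
    unfolding continuous_map
  proof (intro conjI allI impI)
    show "orbit G ` topspace (top_of_set L) \<subseteq> topspace (hk_quotient_top G \<alpha>)"
      unfolding top HK_eq by simp
    fix U assume U: "openin (hk_quotient_top G \<alpha>) U"
    then have U': "U \<subseteq> HK" "openin (top_of_set L) (\<Union>U)" unfolding op by auto
    have "{x \<in> topspace (top_of_set L). orbit G x \<in> U} = \<Union>U"
    proof
      show "{x \<in> topspace (top_of_set L). orbit G x \<in> U} \<subseteq> \<Union>U" using self_orbit by auto
      show "\<Union>U \<subseteq> {x \<in> topspace (top_of_set L). orbit G x \<in> U}"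
      proof
        fix x assume "x \<in> \<Union>U"
        then obtain Q where Q: "x \<in> Q" "Q \<in> U" by blast
        then obtain q where "Q = orbit G q" using U'(1) unfolding HK_eq by blast
        then have "orbit G x = Q" using orbit_trans Q by blast
        moreover have "x \<in> L" using Q U'(1) UHK by blast
        ultimately show "x \<in> {x \<in> topspace (top_of_set L). orbit G x \<in> U}" using Q by simp
      qed
    qed
    then show "openin (top_of_set L) {x \<in> topspace (top_of_set L). orbit G x \<in> U}" using U' by simp
  qed
  show ?thesis unfolding proper_fn_def
  proof (intro allI impI)
    fix K :: "real set" assume "compactin euclideanreal K"
    then have cK: "compact K" by simp
    obtain R where R: "\<forall>x\<in>K. \<bar>x\<bar> \<le> R" using compact_imp_bounded[OF cK] bounded_real by blast
    define C where "C = {p \<in> L. (norm (snd p))^2 / 2 \<in> K}"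
    define Rw where "Rw = 2 * R + 1"
    have Cw: "norm (snd p) \<le> Rw" if "p \<in> C" for p
    proof -
      have a: "(norm (snd p))^2 / 2 \<le> R" using that R unfolding C_def by force
      have b: "0 \<le> (norm (snd p) - 1)^2" by simp
      have c: "(norm (snd p) - 1)^2 = (norm (snd p))^2 - 2 * norm (snd p) + 1"
        by (simp add: power2_eq_square algebra_simps)
      have d: "0 \<le> (norm (snd p))^2" by simp
      show ?thesis unfolding Rw_def using a b c d by linarith
    qed
    have "\<exists>b. \<forall>w\<in>cball 0 Rw. \<bar>mu_dual w X\<bar> \<le> b" for X :: "complex^'n^'n"
    proof -
      have "compact ((\<lambda>w. mu_dual w X) ` cball 0 Rw)"
        by (rule compact_continuous_image[OF continuous_on_subset[OF cont_mud]]) auto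
      then have "bounded ((\<lambda>w. mu_dual w X) ` cball 0 Rw)" by (rule compact_imp_bounded)
      then obtain a where "\<forall>x\<in>(\<lambda>w. mu_dual w X) ` cball 0 Rw. \<bar>x\<bar> \<le> a"
        unfolding bounded_real by blast
      then show ?thesis by auto
    qed
    then have "\<forall>X::complex^'n^'n. \<exists>b. \<forall>w\<in>cball 0 Rw. \<bar>mu_dual w X\<bar> \<le> b" by blast
    then obtain b where b0: "\<forall>X::complex^'n^'n. \<forall>w\<in>cball 0 Rw. \<bar>mu_dual w X\<bar> \<le> b X" by (metis choice)
    then have b: "\<And>(X::complex^'n^'n) w. w \<in> cball 0 Rw \<Longrightarrow> \<bar>mu_dual w X\<bar> \<le> b X" by blast
    define P where "P = PiE (lie_alg G) (\<lambda>X. {\<alpha> X - b X .. \<alpha> X + b X})"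
    have "compactin (dual_top G) P"
      unfolding dual_top_def P_def compactin_PiE by simp
    then have "compactin euclidean {x \<in> topspace euclidean. restrict (mu x) (lie_alg G) \<in> P}"
      using assms(3) unfolding proper_fn_def by blast
    then have cZ: "compact {z. restrict (mu z) (lie_alg G) \<in> P}" by simp
    have sub: "C \<subseteq> {z. restrict (mu z) (lie_alg G) \<in> P} \<times> cball 0 Rw"
    proof
      fix p assume p: "p \<in> C"
      obtain z w where zw: "p = (z, w)" by (cases p)
      have w: "w \<in> cball 0 Rw" using Cw[OF p] zw by simp
      have "mu z X \<in> {\<alpha> X - b X .. \<alpha> X + b X}" if X: "X \<in> lie_alg G" for X
      proof -
        have "mu z X - mu_dual w X = \<alpha> X"
          using p X unfolding C_def L_def level_set_def zw mu_R_def by auto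
        then show ?thesis using b[OF w, of X] by auto
      qed
      then show "p \<in> {z. restrict (mu z) (lie_alg G) \<in> P} \<times> cball 0 Rw"
        using w unfolding zw P_def by (simp add: restrict_PiE_iff)
    qed
    have clC: "closed C"
    proof -
      have "C = L \<inter> (\<lambda>p. (norm (snd p))^2 / 2) -` K" unfolding C_def by auto
      moreover have "closed (UNIV \<inter> (\<lambda>p::(complex^'n)\<times>(complex^'n). (norm (snd p))^2 / 2) -` K)"
        by (rule continuous_closed_preimage) (auto intro!: continuous_intros simp: compact_imp_closed[OF cK])
      ultimately show ?thesis using closed_level unfolding L_def by auto
    qed
    have "compact C"
    proof -
      have "compact (({z. restrict (mu z) (lie_alg G) \<in> P} \<times> cball 0 Rw) \<inter> C)"
        using cZ clC by (intro compact_Int_closed compact_Times) auto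
      moreover have "({z. restrict (mu z) (lie_alg G) \<in> P} \<times> cball 0 Rw) \<inter> C = C" using sub by blast
      ultimately show ?thesis by simp
    qed
    then have "compactin (top_of_set L) C" unfolding compactin_subtopology C_def by auto
    then have cimg: "compactin (hk_quotient_top G \<alpha>) (orbit G ` C)" using image_compactin cont by blast
    have "{x \<in> topspace (hk_quotient_top G \<alpha>). Phi x \<in> K} = orbit G ` C"
    proof
      show "{x \<in> topspace (hk_quotient_top G \<alpha>). Phi x \<in> K} \<subseteq> orbit G ` C"
      proof clarify
        fix Q assume Q: "Q \<in> topspace (hk_quotient_top G \<alpha>)" "Phi Q \<in> K"
        then obtain q where q: "q \<in> L" "Q = orbit G q" unfolding top HK_eq by blast
        have "q \<in> Q" using self_orbit q(2) by simp
        then have ph: "Phi Q = (norm (snd q))^2 / 2" using Phi_orbit q(2) by blast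
        then have "q \<in> C" unfolding C_def using q(1) Q(2) ph by (metis (mono_tags, lifting) mem_Collect_eq)
        then show "Q \<in> orbit G ` C" by (rule image_eqI[where f="orbit G", OF q(2)])
      qed
      show "orbit G ` C \<subseteq> {x \<in> topspace (hk_quotient_top G \<alpha>). Phi x \<in> K}"
      proof clarify
        fix p assume p: "p \<in> C"
        have ph: "Phi (orbit G p) = (norm (snd p))^2 / 2" using Phi_orbit[OF self_orbit refl] by simp
        have "p \<in> L" "(norm (snd p))^2 / 2 \<in> K" using p unfolding C_def by auto
        then show "orbit G p \<in> topspace (hk_quotient_top G \<alpha>) \<and> Phi (orbit G p) \<in> K"
          unfolding top HK_eq ph by simp
      qed
    qed
    then show "compactin (hk_quotient_top G \<alpha>) {x \<in> topspace (hk_quotient_top G \<alpha>). Phi x \<in> K}"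
      using cimg by simp
  qed
qed

end
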